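(* Let $q$ be a prime power, $2\le k\le n$, and let $\mathcal{C}\subseteq\mathbb{F}_q^n$ be a linear code of dimension $k$. Then $$\mathbb{E}[\mathcal{C}] = nH_n - \sum_{s=k}^{n-1} \frac{\beta_{s-k}(\mathcal{C}^\perp, n-s)}{\binom{n-1}{s}}.$$
   Context: $H_m=\sum_{i=1}^m 1/i$. $\mathbb{E}[\mathcal{C}]$ is $\mathbb{E}[G]$ for any generator matrix $G\in\mathbb{F}_q^{k\times n}$ of $\mathcal{C}$, where $\mathbb{E}[G]$ is the expected number of draws when columns of $G$ are drawn independently and uniformly at random from its $n$ columns (with repetition) until the drawn columns span $\mathbb{F}_q^k$. $\mathcal{C}^\perp$ is the dual code (standard inner product). For $x\in\mathbb{F}_q^n$, $\sigma(x)=\{i:x_i\ne 0\}$; for a code $\mathcal{D}$ and $S\subseteq\{1,\dots,n\}$, $\mathcal{D}(S)=\{x\in\mathcal{D}:\sigma(x)\subseteq S\}$, $S^{\mathsf c}=\{1,\dots,n\}\setminus S$, and for an integer $\ell$, $\beta_\ell(\mathcal{D},s)=|\{S\subseteq\{1,\dots,n\}: |S|=s,\ \dim(\mathcal{D}(S^{\mathsf c}))=\ell\}|$. *)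

theory Defs
  imports "HOL-Analysis.Analysis"
begin

text \<open>Linear codes of length n over a finite field 'a are subspaces of 'a^'n, where the
  finite type 'n (with CARD('n) = n) indexes the coordinates.  A generator matrix
  G \<in> F^(k x n) is a matrix of type 'a^'n^'k (CARD('k) = k) whose k rows form a basis of C.\<close>

definition is_generator_matrix :: "'a::field^'n^'k \<Rightarrow> ('a^'n) set \<Rightarrow> bool" where
  "is_generator_matrix G C \<longleftrightarrow>
     inj (\<lambda>i. row i G) \<and> vec.independent (rows G) \<and> vec.span (rows G) = C"

definition cols_span :: "'a::field^'n^'k \<Rightarrow> 'n set \<Rightarrow> bool" where
  "cols_span G J \<longleftrightarrow> vec.span ((\<lambda>j. column j G) ` J) = UNIV"

text \<open>Probability that the stopping time T (number of draws until the drawn columns span F^k)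
  equals t, when positions are drawn independently and uniformly from the n positions:
  a draw sequence of length t is a list of t positions, each sequence having probability n^-t.\<close>
definition prob_stop_at :: "'a::field^'n::finite^'k \<Rightarrow> nat \<Rightarrow> real" where
  "prob_stop_at G t =
     real (card {xs :: 'n list. length xs = t \<and> cols_span G (set xs)
                               \<and> \<not> cols_span G (set (butlast xs))})
     / real (CARD('n)) ^ t"

definition expected_draws :: "'a::field^'n::finite^'k \<Rightarrow> real" where
  "expected_draws G = (\<Sum>t. real t * prob_stop_at G t)"

definition supp :: "'a::zero^'n \<Rightarrow> 'n set" where
  "supp x = {i. x $ i \<noteq> 0}"

definition dual_code :: "('a::comm_ring^'n::finite) set \<Rightarrow> ('a^'n) set" where
  "dual_code C = {y. \<forall>x\<in>C. (\<Sum>i\<in>UNIV. x $ i * y $ i) = 0}"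

definition shortened :: "('a::zero^'n) set \<Rightarrow> 'n set \<Rightarrow> ('a^'n) set" where
  "shortened D S = {x\<in>D. supp x \<subseteq> S}"

definition beta :: "nat \<Rightarrow> ('a::field^'n::finite) set \<Rightarrow> nat \<Rightarrow> nat" where
  "beta l D s = card {S :: 'n set. card S = s \<and> vec.dim (shortened D (- S)) = l}"

end

theory Submission
  imports Defs
begin

fun scount :: "nat \<Rightarrow> nat \<Rightarrow> nat" where
  "scount 0 a = (if a = 0 then 1 else 0)"
| "scount (Suc t) a = a * (scount t a + scount t (a - 1))"

lemma fin_lists: "finite {xs :: 'n::finite list. length xs = t \<and> Q xs}"
  by (rule finite_subset[OF _ finite_lists_length_eq[OF finite[of UNIV], of t]]) auto

lemma card_lists_set_eq:
  "card {xs :: 'n::finite list. length xs = t \<and> set xs = A} = scount t (card A)"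
proof (induction t arbitrary: A)
  case 0
  have "{xs :: 'n list. length xs = 0 \<and> set xs = A} = (if A = {} then {[]} else {})" by auto
  then show ?case by simp
next
  case (Suc t)
  define B where "B x = {ys :: 'n list. length ys = t \<and> set ys = A} \<union> {ys. length ys = t \<and> set ys = A - {x}}" for x
  have eq: "{xs :: 'n list. length xs = Suc t \<and> set xs = A} = (\<lambda>(x,ys). x#ys) ` (SIGMA x:A. B x)"
  proof (rule set_eqI, rule iffI)
    fix xs :: "'n list" assume H: "xs \<in> {xs. length xs = Suc t \<and> set xs = A}"
    then obtain x ys where xs: "xs = x # ys"
      by (cases xs) auto
    have lys: "length ys = t" using H xs by simp
    have sA: "set ys \<union> {x} = A" using H xs by simp
    have xA: "x \<in> A" using sA by blast
    have "set ys = A \<or> set ys = A - {x}"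
    proof (cases "x \<in> set ys")
      case True then show ?thesis using sA by blast
    next
      case False then show ?thesis using sA by blast
    qed
    then have "ys \<in> B x" unfolding B_def using lys by blast
    then have "(x, ys) \<in> (SIGMA x:A. B x)" using xA by blast
    then show "xs \<in> (\<lambda>(x,ys). x#ys) ` (SIGMA x:A. B x)"
      unfolding xs by (rule rev_image_eqI) simp
  next
    fix xs assume "xs \<in> (\<lambda>(x,ys). x#ys) ` (SIGMA x:A. B x)"
    then obtain p where p: "p \<in> (SIGMA x:A. B x)" "xs = (\<lambda>(x,ys). x#ys) p" by blast
    obtain x ys where pxy: "p = (x, ys)" by (cases p)
    have xs: "xs = x # ys" and xA: "x \<in> A" and ys: "ys \<in> B x" using p pxy by auto
    have "length ys = t" "set ys = A \<or> set ys = A - {x}" using ys unfolding B_def by blast+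
    then show "xs \<in> {xs. length xs = Suc t \<and> set xs = A}" using xA xs by auto
  qed
  have inj: "inj_on (\<lambda>(x,ys). x#ys) (SIGMA x:A. B x)" by (auto simp: inj_on_def)
  have cB: "card (B x) = scount t (card A) + scount t (card A - 1)" if "x \<in> A" for x
  proof -
    have "card (B x) = card {ys :: 'n list. length ys = t \<and> set ys = A} + card {ys :: 'n list. length ys = t \<and> set ys = A - {x}}"
      unfolding B_def by (rule card_Un_disjoint) (use that in \<open>auto simp: fin_lists\<close>)
    then show ?thesis using Suc that by simp
  qed
  have "card {xs :: 'n list. length xs = Suc t \<and> set xs = A} = card (SIGMA x:A. B x)"
    unfolding eq by (rule card_image[OF inj])
  also have "\<dots> = (\<Sum>x\<in>A. card (B x))"
    by (rule card_SigmaI) (auto simp: B_def fin_lists)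
  also have "\<dots> = (\<Sum>x\<in>A. scount t (card A) + scount t (card A - 1))"
    using cB by simp
  finally show ?case by simp
qed

lemma scount_le: "a \<le> CARD('n::finite) \<Longrightarrow> scount t a \<le> a ^ t"
proof -
  assume "a \<le> CARD('n)"
  then obtain A :: "'n set" where A: "card A = a"
    by (metis obtain_subset_with_card_n)
  have "scount t a = card {xs :: 'n list. length xs = t \<and> set xs = A}"
    using card_lists_set_eq A by metis
  also have "\<dots> \<le> card {xs. set xs \<subseteq> A \<and> length xs = t}"
    by (rule card_mono[OF finite_lists_length_eq]) auto
  also have "\<dots> = a ^ t" using card_lists_length_eq[of A t] A by simp
  finally show ?thesis .
qed

lemma scount_sums:
  fixes a :: nat
  assumes "a < CARD('n::finite)"
  shows "(\<lambda>t. real (scount t a) / real CARD('n)^t) sums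
           (fact a * fact (CARD('n) - 1 - a) / fact (CARD('n) - 1))"
  using assms
proof (induction a)
  case 0
  have "(\<lambda>t. real (scount t 0) / real CARD('n)^t) = (\<lambda>t. if t = 0 then 1 else 0)"
  proof
    fix t show "real (scount t 0) / real CARD('n)^t = (if t = 0 then 1 else 0)"
      by (cases t) auto
  qed
  moreover have "(\<lambda>t. if t = 0 then 1 else 0 :: real) sums 1"
    using sums_single[of 0 "\<lambda>_. 1::real"] by simp
  ultimately show ?case by simp
next
  case (Suc b)
  define N where "N = real CARD('n)"
  define a where "a = Suc b"
  have N0: "N > 0" unfolding N_def by simp
  have aN: "real a < N" using Suc.prems unfolding a_def N_def by linarith
  define r where "r t = real (scount t a) / N^t" for t
  define rb where "rb t = real (scount t b) / N^t" for t
  define Sb where "Sb = fact b * fact (CARD('n) - 1 - b) / (fact (CARD('n) - 1) :: real)"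
  have IH: "rb sums Sb" using Suc unfolding rb_def Sb_def N_def by simp
  have sr: "summable r"
  proof (rule summable_comparison_test')
    show "summable (\<lambda>t. (real a / N)^t)"
      by (rule summable_geometric) (use aN N0 in simp)
    fix t
    have "scount t a \<le> a ^ t" using scount_le[where 'n='n, of a t] Suc.prems unfolding a_def by simp
    then have "real (scount t a) \<le> real a ^ t" by (metis of_nat_le_iff of_nat_power)
    then show "norm (r t) \<le> (real a / N)^t"
      unfolding r_def using N0 by (simp add: power_divide divide_right_mono)
  qed
  define S where "S = suminf r"
  have rS: "r sums S" using sr unfolding S_def by (simp add: summable_sums)
  have rec: "r (Suc t) = (real a / N) * (r t + rb t)" for t
  proof -
    have "b = a - 1" unfolding a_def by simp
    then have "real (scount (Suc t) a) = real a * (real (scount t a) + real (scount t b))"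
      by simp
    then show ?thesis unfolding r_def rb_def using N0 by (simp add: field_simps)
  qed
  have "(\<lambda>t. r (Suc t)) sums ((real a / N) * (S + Sb))"
    unfolding rec by (intro sums_mult sums_add rS IH)
  moreover have "(\<lambda>t. r (Suc t)) sums S"
    using rS sums_Suc_iff[of r S] unfolding r_def a_def by simp
  ultimately have eq: "S = (real a / N) * (S + Sb)" using sums_unique2 by blast
  have SS: "S = real a * Sb / (N - real a)"
    using eq aN N0 by (simp add: field_simps)
  have f1: "fact a = real a * fact b" unfolding a_def by simp
  have f2: "fact (CARD('n) - 1 - b) = (N - real a) * (fact (CARD('n) - 1 - a) :: real)"
  proof -
    have "CARD('n) - 1 - b = Suc (CARD('n) - 1 - a)" using Suc.prems unfolding a_def by simp
    moreover have "real (Suc (CARD('n) - 1 - a)) = N - real a"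
      using Suc.prems unfolding a_def N_def by (simp add: of_nat_diff)
    ultimately show ?thesis by (metis fact_Suc of_nat_fact)
  qed
  have "S = fact a * fact (CARD('n) - 1 - a) / fact (CARD('n) - 1)"
    unfolding SS Sb_def f1 f2 using aN by (simp add: field_simps)
  then show ?case using rS unfolding r_def N_def a_def by simp
qed

definition Tc :: "('n::finite set \<Rightarrow> bool) \<Rightarrow> nat \<Rightarrow> nat" where
  "Tc P t = card {xs :: 'n list. length xs = t \<and> \<not> P (set xs)}"

definition ps :: "('n::finite set \<Rightarrow> bool) \<Rightarrow> nat \<Rightarrow> nat" where
  "ps P t = card {xs :: 'n list. length xs = t \<and> P (set xs) \<and> \<not> P (set (butlast xs))}"

definition cc :: "nat \<Rightarrow> nat \<Rightarrow> real" where
  "cc N a = fact a * fact (N - 1 - a) / fact (N - 1)"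

lemma Tc_sum:
  "Tc (P :: 'n::finite set \<Rightarrow> bool) t = (\<Sum>A\<in>{A. \<not> P A}. scount t (card A))"
proof -
  have eq: "{xs :: 'n list. length xs = t \<and> \<not> P (set xs)} =
      (\<Union>A\<in>{A. \<not> P A}. {xs. length xs = t \<and> set xs = A})" by auto
  have "card (\<Union>A\<in>{A. \<not> P A}. {xs :: 'n list. length xs = t \<and> set xs = A})
      = (\<Sum>A\<in>{A. \<not> P A}. card {xs :: 'n list. length xs = t \<and> set xs = A})"
    by (rule card_UN_disjoint) (auto simp: fin_lists)
  then show ?thesis unfolding Tc_def eq by (simp add: card_lists_set_eq)
qed

lemma Tc_sums:
  assumes PU: "P UNIV"
  shows "(\<lambda>t. real (Tc (P :: 'n::finite set \<Rightarrow> bool) t) / real CARD('n)^t) sums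
           (\<Sum>A\<in>{A. \<not> P A}. cc CARD('n) (card A))"
proof -
  have "(\<lambda>t. \<Sum>A\<in>{A. \<not> P A}. real (scount t (card A)) / real CARD('n)^t) sums
           (\<Sum>A\<in>{A. \<not> P A}. cc CARD('n) (card A))"
  proof (rule sums_sum)
    fix A :: "'n set" assume "A \<in> {A. \<not> P A}"
    then have "A \<noteq> UNIV" using PU by auto
    then have "card A < CARD('n)" by (simp add: psubset_card_mono psubsetI)
    then show "(\<lambda>t. real (scount t (card A)) / real CARD('n)^t) sums cc CARD('n) (card A)"
      unfolding cc_def by (rule scount_sums)
  qed
  then show ?thesis unfolding Tc_sum by (simp add: sum_divide_distrib)
qed

lemma ps_0: "ps P 0 = 0"
  unfolding ps_def by simp

lemma ps_Suc:
  assumes mono: "\<And>A B. A \<subseteq> B \<Longrightarrow> P A \<Longrightarrow> P B"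
  shows "ps (P :: 'n::finite set \<Rightarrow> bool) (Suc t) + Tc P (Suc t) = CARD('n) * Tc P t"
proof -
  define S1 where "S1 = {xs :: 'n list. length xs = Suc t \<and> \<not> P (set (butlast xs))}"
  define S2 where "S2 = {xs :: 'n list. length xs = Suc t \<and> \<not> P (set xs)}"
  have sub: "S2 \<subseteq> S1" unfolding S1_def S2_def
    using mono[of "set (butlast _)" "set _"] by (auto dest: in_set_butlastD)
  have fin1: "finite S1" unfolding S1_def by (rule fin_lists)
  have ps_eq: "ps P (Suc t) = card (S1 - S2)"
    unfolding ps_def S1_def S2_def by (rule arg_cong[where f=card]) auto
  have "card (S1 - S2) = card S1 - card S2" by (rule card_Diff_subset[OF finite_subset[OF sub fin1] sub])
  moreover have "card S2 \<le> card S1" by (rule card_mono[OF fin1 sub])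
  moreover have "card S2 = Tc P (Suc t)" unfolding S2_def Tc_def ..
  moreover have "card S1 = CARD('n) * Tc P t"
  proof -
    have eq: "S1 = (\<lambda>(ys,x). ys @ [x]) ` ({ys. length ys = t \<and> \<not> P (set ys)} \<times> UNIV)"
    proof (rule set_eqI, rule iffI)
      fix xs assume H: "xs \<in> S1"
      then have ne: "xs \<noteq> []" unfolding S1_def by auto
      have "xs = butlast xs @ [last xs]" using ne by simp
      moreover have "(butlast xs, last xs) \<in> {ys. length ys = t \<and> \<not> P (set ys)} \<times> UNIV"
        using H unfolding S1_def by auto
      ultimately show "xs \<in> (\<lambda>(ys,x). ys @ [x]) ` ({ys. length ys = t \<and> \<not> P (set ys)} \<times> UNIV)"
        by (metis (no_types, lifting) case_prod_conv image_eqI)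
    next
      fix xs assume "xs \<in> (\<lambda>(ys,x). ys @ [x]) ` ({ys. length ys = t \<and> \<not> P (set ys)} \<times> UNIV)"
      then show "xs \<in> S1" unfolding S1_def by auto
    qed
    have inj: "inj_on (\<lambda>(ys,x). ys @ [x]) ({ys :: 'n list. length ys = t \<and> \<not> P (set ys)} \<times> UNIV)"
      by (auto simp: inj_on_def)
    have "card S1 = card ({ys :: 'n list. length ys = t \<and> \<not> P (set ys)} \<times> (UNIV :: 'n set))"
      unfolding eq by (rule card_image[OF inj])
    then show ?thesis unfolding Tc_def card_cartesian_product by simp
  qed
  ultimately show ?thesis using ps_eq by simp
qed

lemma Tc_times_t_lim:
  assumes PU: "P UNIV"
  shows "(\<lambda>t. real t * (real (Tc (P :: 'n::finite set \<Rightarrow> bool) t) / real CARD('n)^t)) \<longlonglongrightarrow> 0"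
proof (rule Lim_null_comparison)
  define N where "N = real CARD('n)"
  define M where "M = real (card {A :: 'n set. \<not> P A})"
  have N0: "N > 0" unfolding N_def by simp
  show "(\<lambda>t. M * (real t * ((N - 1) / N)^t)) \<longlonglongrightarrow> 0"
  proof -
    have N1: "N \<ge> 1" unfolding N_def by simp
    then have "norm ((N - 1) / N) < 1" by simp
    then show ?thesis using powser_times_n_limit_0[of "(N - 1) / N"]
      by (intro tendsto_mult_right_zero) simp
  qed
  show "\<forall>\<^sub>F t in sequentially. norm (real t * (real (Tc P t) / real CARD('n)^t))
          \<le> M * (real t * ((N - 1) / N)^t)"
  proof (rule always_eventually, rule allI)
    fix t
    have "Tc P t \<le> (\<Sum>A\<in>{A. \<not> P A}. (CARD('n) - 1) ^ t)"
      unfolding Tc_sum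
    proof (rule sum_mono)
      fix A :: "'n set" assume "A \<in> {A. \<not> P A}"
      then have "A \<noteq> UNIV" using PU by auto
      then have c: "card A < CARD('n)" by (simp add: psubset_card_mono psubsetI)
      have "scount t (card A) \<le> card A ^ t" using c scount_le[where 'n='n, of "card A" t] by simp
      also have "\<dots> \<le> (CARD('n) - 1) ^ t" using c by (intro power_mono) auto
      finally show "scount t (card A) \<le> (CARD('n) - 1) ^ t" .
    qed
    then have "Tc P t \<le> card {A. \<not> P A} * (CARD('n) - 1)^t" by simp
    then have "real (Tc P t) \<le> real (card {A. \<not> P A} * (CARD('n) - 1)^t)" by (rule of_nat_mono)
    moreover have "real (card {A. \<not> P A} * (CARD('n) - 1)^t) = M * (N - 1) ^ t"
      unfolding M_def N_def by (simp add: of_nat_diff)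
    ultimately have "real (Tc P t) \<le> M * (N - 1) ^ t" by simp
    then have "real (Tc P t) / N^t \<le> M * ((N - 1) / N) ^ t"
      using N0 by (simp add: power_divide divide_right_mono)
    then have "real t * (real (Tc P t) / N^t) \<le> real t * (M * ((N - 1) / N) ^ t)"
      by (rule mult_left_mono) simp
    moreover have "norm (real t * (real (Tc P t) / N^t)) = real t * (real (Tc P t) / N^t)"
    proof -
      have "0 \<le> real t * (real (Tc P t) / N^t)" using N0 by simp
      then show ?thesis by (simp only: real_norm_def abs_of_nonneg)
    qed
    moreover have "real t * (M * ((N - 1) / N) ^ t) = M * (real t * ((N - 1) / N) ^ t)" by simp
    ultimately show "norm (real t * (real (Tc P t) / real CARD('n)^t)) \<le> M * (real t * ((N - 1) / N)^t)"
      unfolding N_def by linarith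
  qed
qed

lemma expectation_generic:
  assumes mono: "\<And>A B. A \<subseteq> B \<Longrightarrow> P A \<Longrightarrow> P B" and PU: "P UNIV"
  shows "(\<lambda>t. real t * (real (ps (P :: 'n::finite set \<Rightarrow> bool) t) / real CARD('n)^t)) sums
           (\<Sum>A\<in>{A. \<not> P A}. cc CARD('n) (card A))"
proof -
  define N where "N = real CARD('n)"
  have N0: "N > 0" unfolding N_def by simp
  define a where "a t = real (Tc P t) / N^t" for t
  define p where "p t = real (ps P t) / N^t" for t
  define S where "S = (\<Sum>A\<in>{A. \<not> P A}. cc CARD('n) (card A))"
  have p0: "p 0 = 0" unfolding p_def by (simp add: ps_0)
  have pS: "p (Suc t) = a t - a (Suc t)" for t
  proof -
    have "real (ps P (Suc t) + Tc P (Suc t)) = real (CARD('n) * Tc P t)"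
      using ps_Suc[of P t, OF mono] by (rule arg_cong)
    then have "real (ps P (Suc t)) + real (Tc P (Suc t)) = N * real (Tc P t)"
      unfolding N_def of_nat_add of_nat_mult .
    then show ?thesis unfolding p_def a_def using N0 by (simp add: field_simps)
  qed
  have part: "(\<Sum>t<Suc m. real t * p t) = (\<Sum>t<m. a t) - real m * a m" for m
  proof (induction m)
    case 0 then show ?case by (simp add: p0)
  next
    case (Suc m)
    have "(\<Sum>t<Suc (Suc m). real t * p t) = (\<Sum>t<Suc m. real t * p t) + real (Suc m) * p (Suc m)"
      by simp
    also have "\<dots> = (\<Sum>t<Suc m. a t) - real (Suc m) * a (Suc m)"
      unfolding Suc pS by (simp add: algebra_simps)
    finally show ?case .
  qed
  have aS: "a sums S" unfolding a_def S_def N_def by (rule Tc_sums[of P, OF PU])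
  have lim0: "(\<lambda>m. real m * a m) \<longlonglongrightarrow> 0"
    unfolding a_def N_def by (rule Tc_times_t_lim[of P, OF PU])
  have "(\<lambda>m. (\<Sum>t<m. a t) - real m * a m) \<longlonglongrightarrow> S - 0"
    using aS lim0 unfolding sums_def by (intro tendsto_diff)
  then have "(\<lambda>m. \<Sum>t<Suc m. real t * p t) \<longlonglongrightarrow> S" unfolding part by simp
  then have "(\<lambda>m. \<Sum>t<m. real t * p t) \<longlonglongrightarrow> S"
    by (rule filterlim_sequentially_Suc[THEN iffD1])
  then show ?thesis unfolding sums_def p_def N_def S_def .
qed

lemma rank_nullity_vec:
  fixes f :: "'a::field^'n \<Rightarrow> 'a^'m" and W :: "('a^'n) set"
  assumes lf: "Vector_Spaces.linear (*s) (*s) f" and W: "vec.subspace W"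
  shows "vec.dim {x\<in>W. f x = 0} + vec.dim (f ` W) = vec.dim W"
proof -
  interpret lf: Vector_Spaces.linear "(*s)" "(*s)" f by (rule lf)
  define K where "K = {x\<in>W. f x = 0}"
  have KW: "K \<subseteq> W" by (auto simp: K_def)
  obtain B0 where B0: "B0 \<subseteq> K" "vec.independent B0" "K \<subseteq> vec.span B0" "card B0 = vec.dim K"
    by (rule vec.basis_exists[of K])
  obtain B where B: "B0 \<subseteq> B" "B \<subseteq> W" "vec.independent B" "W \<subseteq> vec.span B"
    using vec.maximal_independent_subset_extend[OF _ B0(2), of W] B0(1) KW by blast
  define B1 where "B1 = B - B0"
  have finB: "finite B" by (rule vec.finiteI_independent[OF B(3)])
  have dimW: "vec.dim W = card B" by (rule vec.basis_card_eq_dim[OF B(2) B(4) B(3), symmetric])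
  have spanBW: "vec.span B = W"
    using vec.span_minimal[OF B(2) W] B(4) by blast
  have cardB: "card B = card B0 + card B1"
    unfolding B1_def using card_Diff_subset[OF finite_subset[OF B(1) finB] B(1)]
      card_mono[OF finB B(1)] by simp
  have indB1: "vec.independent B1" unfolding B1_def
    by (rule vec.independent_mono[OF B(3)]) blast
  have int0: "x = 0" if x0: "x \<in> vec.span B0" and x1: "x \<in> vec.span B1" for x
  proof -
    have "vec.dim {x + y |x y. x \<in> vec.span B0 \<and> y \<in> vec.span B1} + vec.dim (vec.span B0 \<inter> vec.span B1)
        = vec.dim (vec.span B0) + vec.dim (vec.span B1)"
      by (rule vec.dim_sums_Int) simp_all
    also have "\<dots> = card B0 + card B1"
      using vec.dim_span_eq_card_independent[OF B0(2)] vec.dim_span_eq_card_independent[OF indB1] by simp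
    finally have eq: "vec.dim {x + y |x y. x \<in> vec.span B0 \<and> y \<in> vec.span B1} + vec.dim (vec.span B0 \<inter> vec.span B1)
        = card B" using cardB by simp
    have "B \<subseteq> {x + y |x y. x \<in> vec.span B0 \<and> y \<in> vec.span B1}"
    proof
      fix b assume "b \<in> B"
      show "b \<in> {x + y |x y. x \<in> vec.span B0 \<and> y \<in> vec.span B1}"
      proof (cases "b \<in> B0")
        case True
        then have "b = b + 0 \<and> b \<in> vec.span B0 \<and> 0 \<in> vec.span B1"
          by (simp add: vec.span_base vec.span_zero)
        then show ?thesis by blast
      next
        case False
        then have "b \<in> B1" using \<open>b \<in> B\<close> unfolding B1_def by blast
        then have "b = 0 + b \<and> 0 \<in> vec.span B0 \<and> b \<in> vec.span B1"
          by (simp add: vec.span_base vec.span_zero)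
        then show ?thesis by blast
      qed
    qed
    then have "card B \<le> vec.dim {x + y |x y. x \<in> vec.span B0 \<and> y \<in> vec.span B1}"
      by (rule vec.independent_card_le_dim[OF _ B(3)])
    then have "vec.dim (vec.span B0 \<inter> vec.span B1) = 0" using eq by linarith
    then have "vec.span B0 \<inter> vec.span B1 \<subseteq> {0}" by simp
    then show ?thesis using x0 x1 by blast
  qed
  have inj: "inj_on f (vec.span B1)"
  proof (rule inj_onI)
    fix x y assume x: "x \<in> vec.span B1" and y: "y \<in> vec.span B1" and fxy: "f x = f y"
    have d1: "x - y \<in> vec.span B1" by (rule vec.span_diff[OF x y])
    have "vec.span B1 \<subseteq> vec.span B" unfolding B1_def by (rule vec.span_mono) blast
    then have "x - y \<in> W" using d1 spanBW by blast
    moreover have "f (x - y) = 0" using fxy by (simp add: lf.diff)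
    ultimately have "x - y \<in> K" unfolding K_def by blast
    then have "x - y \<in> vec.span B0" using B0(3) by blast
    then have "x - y = 0" using int0 d1 by blast
    then show "x = y" by simp
  qed
  have dimfB1: "vec.dim (f ` B1) = card B1"
    using vec.dim_image_eq[OF lf inj] vec.dim_eq_card_independent[OF indB1] by simp
  have fW: "f ` W = vec.span (f ` B1)"
  proof -
    have "f ` W = vec.span (f ` B)" unfolding spanBW[symmetric] lf.span_image ..
    also have "\<dots> = vec.span (f ` B1)"
    proof
      show "vec.span (f ` B1) \<subseteq> vec.span (f ` B)"
        unfolding B1_def by (rule vec.span_mono) blast
      have "f ` B \<subseteq> vec.span (f ` B1)"
      proof
        fix z assume "z \<in> f ` B"
        then obtain b where b: "b \<in> B" "z = f b" by blast
        show "z \<in> vec.span (f ` B1)"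
        proof (cases "b \<in> B0")
          case True
          then have "f b = 0" using B0(1) unfolding K_def by blast
          then show ?thesis using b vec.span_zero by simp
        next
          case False
          then have "b \<in> B1" using b unfolding B1_def by blast
          then show ?thesis using b by (simp add: vec.span_base)
        qed
      qed
      then show "vec.span (f ` B) \<subseteq> vec.span (f ` B1)"
        using vec.span_minimal[OF _ vec.subspace_span] by blast
    qed
    finally show ?thesis .
  qed
  have "vec.dim (f ` W) = card B1" unfolding fW vec.dim_span dimfB1 ..
  then show ?thesis using B0(4) dimW cardB unfolding K_def by simp
qed

lemma dual_code_span_rows:
  fixes G :: "'a::field^'n::finite^'k::finite"
  shows "dual_code (vec.span (rows G)) = {y. G *v y = 0}"
proof (rule set_eqI, rule iffI)
  fix y assume "y \<in> dual_code (vec.span (rows G))"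
  then have H: "\<forall>x\<in>vec.span (rows G). (\<Sum>i\<in>UNIV. x $ i * y $ i) = 0" unfolding dual_code_def by simp
  have "(G *v y) $ i = 0" for i
  proof -
    have "row i G \<in> vec.span (rows G)" by (rule vec.span_base) (auto simp: rows_def)
    then have "(\<Sum>j\<in>UNIV. row i G $ j * y $ j) = 0" using H by blast
    then show ?thesis by (simp add: matrix_vector_mult_def row_def)
  qed
  then show "y \<in> {y. G *v y = 0}" by (simp add: vec_eq_iff)
next
  fix y assume "y \<in> {y. G *v y = 0}"
  then have G0: "G *v y = 0" by simp
  define Z where "Z = {x :: 'a^'n. (\<Sum>i\<in>UNIV. x $ i * y $ i) = 0}"
  have sZ: "vec.subspace Z"
    unfolding vec.subspace_def Z_def
    by (simp add: distrib_right sum.distrib sum_distrib_left[symmetric] mult.assoc)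
  have "rows G \<subseteq> Z"
  proof
    fix x assume "x \<in> rows G"
    then obtain i where "x = row i G" by (auto simp: rows_def)
    moreover have "(G *v y) $ i = 0" using G0 by simp
    ultimately show "x \<in> Z" unfolding Z_def by (simp add: matrix_vector_mult_def row_def)
  qed
  then have "vec.span (rows G) \<subseteq> Z" by (rule vec.span_minimal[OF _ sZ])
  then show "y \<in> dual_code (vec.span (rows G))" unfolding dual_code_def Z_def by blast
qed

lemma mult_axis_column:
  fixes G :: "'a::field^'n::finite^'k::finite"
  shows "G *v axis j 1 = column j G"
proof -
  have "(\<Sum>x\<in>UNIV. G $ i $ x * (if x = j then 1 else 0)) = G $ i $ j" for i
    by (simp add: if_distrib cong: if_cong)
  then show ?thesis by (simp add: vec_eq_iff matrix_vector_mult_def column_def axis_def)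
qed

lemma span_axis:
  "vec.span ((\<lambda>j. axis j (1::'a::field)) ` T) = {y :: 'a^'n::finite. supp y \<subseteq> T}"
proof
  have ss: "supp y \<subseteq> T \<longleftrightarrow> (\<forall>i. i \<notin> T \<longrightarrow> y $ i = 0)" for y :: "'a^'n"
    by (auto simp: supp_def)
  have sW: "vec.subspace {y :: 'a^'n. supp y \<subseteq> T}"
    unfolding vec.subspace_def ss by auto
  show "vec.span ((\<lambda>j. axis j 1) ` T) \<subseteq> {y :: 'a^'n. supp y \<subseteq> T}"
    by (rule vec.span_minimal[OF _ sW]) (auto simp: supp_def axis_def split: if_splits)
  show "{y :: 'a^'n. supp y \<subseteq> T} \<subseteq> vec.span ((\<lambda>j. axis j 1) ` T)"
  proof
    fix y :: "'a^'n" assume "y \<in> {y. supp y \<subseteq> T}"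
    then have yT: "\<And>i. i \<notin> T \<Longrightarrow> y $ i = 0" by (auto simp: supp_def)
    have "y = (\<Sum>j\<in>T. y $ j *s axis j 1)"
    proof (subst vec_eq_iff, rule allI)
      fix i
      have "(\<Sum>j\<in>T. y $ j *s axis j (1::'a)) $ i = (\<Sum>j\<in>T. y $ j * (if i = j then 1 else 0))"
        by (simp add: sum_component axis_def)
      also have "\<dots> = (if i \<in> T then y $ i else 0)"
        by (simp add: if_distrib cong: if_cong)
      also have "\<dots> = y $ i" using yT by auto
      finally show "y $ i = (\<Sum>j\<in>T. y $ j *s axis j 1) $ i" by simp
    qed
    also have "\<dots> \<in> vec.span ((\<lambda>j. axis j 1) ` T)"
      by (intro vec.span_sum vec.span_scale vec.span_base) auto
    finally show "y \<in> vec.span ((\<lambda>j. axis j 1) ` T)" .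
  qed
qed

lemma dim_supp:
  "vec.dim {y :: 'a::field^'n::finite. supp y \<subseteq> T} = card T"
proof -
  have ind: "vec.independent ((\<lambda>j. axis j (1::'a)) ` T)"
    by (rule vec.independent_mono[OF independent_cart_basis]) (auto simp: cart_basis_def)
  have inj: "inj_on (\<lambda>j. axis j (1::'a)) T" by (auto simp: inj_on_def axis_eq_axis)
  show ?thesis unfolding span_axis[symmetric] vec.dim_span_eq_card_independent[OF ind]
    using card_image[OF inj] by simp
qed

lemma rank_nullity_short:
  fixes G :: "'a::field^'n::finite^'k::finite"
  shows "vec.dim (shortened (dual_code (vec.span (rows G))) T) + vec.dim ((\<lambda>j. column j G) ` T) = card T"
proof -
  interpret lf: Vector_Spaces.linear "(*s)" "(*s)" "(*v) G" by (rule matrix_vector_mul_linear_gen)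
  define W where "W = {y :: 'a^'n. supp y \<subseteq> T}"
  have sW: "vec.subspace W" unfolding W_def span_axis[symmetric] by simp
  have e1: "shortened (dual_code (vec.span (rows G))) T = {x \<in> W. G *v x = 0}"
    unfolding shortened_def dual_code_span_rows W_def by auto
  have "(*v) G ` W = vec.span ((*v) G ` (\<lambda>j. axis j 1) ` T)"
    unfolding W_def span_axis[symmetric] vec.linear_span_image[OF matrix_vector_mul_linear_gen] ..
  also have "(*v) G ` (\<lambda>j. axis j 1) ` T = (\<lambda>j. column j G) ` T"
    by (auto simp: mult_axis_column image_image)
  finally have e2: "vec.dim ((*v) G ` W) = vec.dim ((\<lambda>j. column j G) ` T)"
    by (simp add: vec.dim_span)
  have "vec.dim {x \<in> W. G *v x = 0} + vec.dim ((*v) G ` W) = vec.dim W"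
    by (rule rank_nullity_vec[OF matrix_vector_mul_linear_gen sW])
  then have "vec.dim {x \<in> W. G *v x = 0} + vec.dim ((\<lambda>j. column j G) ` T) = vec.dim W"
    by (simp only: e2)
  then show ?thesis unfolding e1 unfolding W_def dim_supp .
qed

lemma cols_span_iff_dim:
  fixes G :: "'a::field^'n::finite^'k::finite"
  shows "cols_span G T \<longleftrightarrow> vec.dim ((\<lambda>j. column j G) ` T) = CARD('k)"
proof -
  have "vec.dim ((\<lambda>j. column j G) ` T) = CARD('k) \<longleftrightarrow> vec.span ((\<lambda>j. column j G) ` T) = UNIV"
    using vec.dim_eq_full[of "(\<lambda>j. column j G) ` T"] unfolding vec.dimension_def card_cart_basis .
  then show ?thesis unfolding cols_span_def by simp
qed

lemma dim_rows_le_dim_cols: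
  fixes G :: "'a::field^'n::finite^'k::finite"
  shows "vec.dim (rows G) \<le> vec.dim (columns G)"
proof -
  obtain B where B: "B \<subseteq> columns G" "vec.independent B" "columns G \<subseteq> vec.span B"
      "card B = vec.dim (columns G)"
    by (rule vec.basis_exists)
  have finB: "finite B" by (rule vec.finiteI_independent[OF B(2)])
  have "\<forall>j. \<exists>w. column j G = (\<Sum>b\<in>B. w b *s b)"
  proof
    fix j
    have "column j G \<in> vec.span B" using B(3) by (auto simp: columns_def)
    then show "\<exists>w. column j G = (\<Sum>b\<in>B. w b *s b)" unfolding vec.span_finite[OF finB] by auto
  qed
  then obtain u where u: "\<And>j. column j G = (\<Sum>b\<in>B. u j b *s b)" by metis
  define d where "d b = (\<chi> j. u j b)" for b
  have "rows G \<subseteq> vec.span (d ` B)"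
  proof
    fix r assume "r \<in> rows G"
    then obtain i where r: "r = row i G" by (auto simp: rows_def)
    have "row i G = (\<Sum>b\<in>B. (b $ i) *s d b)"
    proof (subst vec_eq_iff, rule allI)
      fix j
      have "row i G $ j = column j G $ i" by (simp add: row_def column_def)
      also have "\<dots> = (\<Sum>b\<in>B. u j b * b $ i)" unfolding u by (simp add: sum_component)
      also have "\<dots> = (\<Sum>b\<in>B. (b $ i) *s d b) $ j" by (simp add: sum_component d_def mult.commute)
      finally show "row i G $ j = (\<Sum>b\<in>B. (b $ i) *s d b) $ j" .
    qed
    also have "\<dots> \<in> vec.span (d ` B)"
      by (intro vec.span_sum vec.span_scale vec.span_base) auto
    finally show "r \<in> vec.span (d ` B)" unfolding r .
  qed
  then have "vec.dim (rows G) \<le> card (d ` B)" by (rule vec.dim_le_card) (simp add: finB)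
  also have "\<dots> \<le> card B" by (rule card_image_le[OF finB])
  finally show ?thesis using B(4) by simp
qed

lemma cols_span_UNIV:
  fixes G :: "'a::field^'n::finite^'k::finite"
  assumes "is_generator_matrix G C"
  shows "cols_span G UNIV"
proof -
  have inj: "inj (\<lambda>i. row i G)" and ind: "vec.independent (rows G)"
    using assms unfolding is_generator_matrix_def by auto
  have "rows G = range (\<lambda>i. row i G)" by (auto simp: rows_def)
  then have "card (rows G) = CARD('k)" using card_image[OF inj] by simp
  then have "vec.dim (rows G) = CARD('k)" using vec.dim_eq_card_independent[OF ind] by simp
  then have "CARD('k) \<le> vec.dim (columns G)" using dim_rows_le_dim_cols[of G] by simp
  moreover have "vec.dim (columns G) \<le> CARD('k)" by (rule dim_subset_UNIV_cart_gen)
  moreover have "columns G = (\<lambda>j. column j G) ` UNIV" by (auto simp: columns_def)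
  ultimately show ?thesis unfolding cols_span_iff_dim by simp
qed

lemma sum_by_card:
  fixes g :: "nat \<Rightarrow> real"
  assumes "finite S" "\<And>A. Q A \<Longrightarrow> card A \<in> S"
  shows "(\<Sum>A\<in>{A::'n::finite set. Q A}. g (card A)) = (\<Sum>s\<in>S. real (card {A. Q A \<and> card A = s}) * g s)"
proof -
  have "(\<Sum>A\<in>{A::'n set. Q A}. g (card A)) = (\<Sum>s\<in>S. \<Sum>A\<in>{x \<in> {A. Q A}. card x = s}. g (card A))"
    by (rule sum.group[symmetric]) (use assms in auto)
  also have "\<dots> = (\<Sum>s\<in>S. \<Sum>A\<in>{x \<in> {A. Q A}. card x = s}. g s)"
    by (intro sum.cong) auto
  also have "\<dots> = (\<Sum>s\<in>S. real (card {A. Q A \<and> card A = s}) * g s)"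
    by simp
  finally show ?thesis .
qed

lemma card_compl_n: "card (- A) = CARD('n::finite) - card (A :: 'n set)"
  by (simp add: Compl_eq_Diff_UNIV card_Diff_subset)

lemma choose_cc:
  assumes "s < n"
  shows "real (n choose s) * cc n s = real n / real (n - s)"
proof -
  have n0: "n > 0" using assms by simp
  have f1: "fact n = real n * fact (n - 1)" using fact_reduce[OF n0, where 'a=real] by simp
  have f2: "fact (n - s) = real (n - s) * fact (n - 1 - s)"
    using fact_reduce[of "n - s", where 'a=real] assms by (simp add: diff_commute of_nat_diff)
  have "real (n choose s) = fact n / (fact s * fact (n - s))" by (rule binomial_fact) (use assms in simp)
  then show ?thesis unfolding cc_def f1 f2 using assms by (simp add: field_simps)
qed

lemma cc_choose:
  assumes "s < n"
  shows "cc n s = 1 / real ((n - 1) choose s)"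
proof -
  have "real ((n - 1) choose s) = fact (n - 1) / (fact s * fact (n - 1 - s))"
    by (rule binomial_fact) (use assms in simp)
  then show ?thesis unfolding cc_def by simp
qed

lemma harm_sum:
  "(\<Sum>A\<in>{A::'n::finite set. A \<noteq> UNIV}. cc CARD('n) (card A)) = real CARD('n) * harm CARD('n)"
proof -
  define n where "n = CARD('n)"
  have "(\<Sum>A\<in>{A::'n set. A \<noteq> UNIV}. cc n (card A)) =
        (\<Sum>s\<in>{..<n}. real (card {A::'n set. A \<noteq> UNIV \<and> card A = s}) * cc n s)"
  proof (rule sum_by_card)
    fix A :: "'n set" assume "A \<noteq> UNIV"
    then show "card A \<in> {..<n}" unfolding n_def by (simp add: psubset_card_mono psubsetI)
  qed simp
  also have "\<dots> = (\<Sum>s\<in>{..<n}. real n / real (n - s))"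
  proof (rule sum.cong[OF refl])
    fix s assume "s \<in> {..<n}"
    then have sn: "s < n" by simp
    have "{A::'n set. A \<noteq> UNIV \<and> card A = s} = {A. A \<subseteq> UNIV \<and> card A = s}"
      using sn unfolding n_def by auto
    then have "card {A::'n set. A \<noteq> UNIV \<and> card A = s} = n choose s"
      using n_subsets[of "UNIV :: 'n set" s] unfolding n_def by simp
    then show "real (card {A::'n set. A \<noteq> UNIV \<and> card A = s}) * cc n s = real n / real (n - s)"
      using choose_cc[OF sn] by simp
  qed
  also have "\<dots> = real n * (\<Sum>s<n. inverse (real (n - s)))"
    by (simp add: sum_distrib_left divide_inverse)
  also have "(\<Sum>s<n. inverse (real (n - s))) = (\<Sum>s<n. inverse (real (Suc s)))"
  proof -
    have "(\<Sum>s<n. inverse (real (Suc (n - Suc s)))) = (\<Sum>s<n. inverse (real (Suc s)))"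
      by (rule sum.nat_diff_reindex)
    moreover have "(\<Sum>s<n. inverse (real (n - s))) = (\<Sum>s<n. inverse (real (Suc (n - Suc s))))"
      by (intro sum.cong) (auto simp: Suc_diff_Suc)
    ultimately show ?thesis by simp
  qed
  finally show ?thesis unfolding n_def harm_altdef by simp
qed

theorem mainTheorem5:
  fixes C :: "('a::{field,finite}^'n::finite) set"
    and G :: "'a^'n^'k::finite"
    and n k :: nat
  assumes "CARD('n) = n" and "CARD('k) = k"
    and "2 \<le> k" and "k \<le> n"
    and "vec.subspace C" and "vec.dim C = k"
    and "is_generator_matrix G C"
  shows "expected_draws G =
           real n * harm n
           - (\<Sum>s=k..n-1. real (beta (s - k) (dual_code C) (n - s)) / real ((n - 1) choose s))"
proof -
  let ?P = "cols_span G"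
  have Cs: "C = vec.span (rows G)" using assms(7) unfolding is_generator_matrix_def by simp
  have mono: "\<And>A B. A \<subseteq> B \<Longrightarrow> ?P A \<Longrightarrow> ?P B" unfolding cols_span_def
    by (metis (no_types, lifting) image_mono top.extremum_uniqueI vec.span_mono)
  have PU: "?P UNIV" by (rule cols_span_UNIV[OF assms(7)])
  have pe: "prob_stop_at G t = real (ps ?P t) / real CARD('n)^t" for t
    unfolding prob_stop_at_def ps_def ..
  have E1: "expected_draws G = (\<Sum>A\<in>{A. \<not> ?P A}. cc n (card A))"
    unfolding expected_draws_def pe assms(1)[symmetric]
    using expectation_generic[of ?P, OF mono PU] by (rule sums_unique[symmetric])
  have split: "{A. \<not> ?P A} = {A. A \<noteq> UNIV} - {A. A \<noteq> UNIV \<and> ?P A}" using PU by auto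
  have E2: "(\<Sum>A\<in>{A. \<not> ?P A}. cc n (card A)) =
      (\<Sum>A\<in>{A::'n set. A \<noteq> UNIV}. cc n (card A)) - (\<Sum>A\<in>{A. A \<noteq> UNIV \<and> ?P A}. cc n (card A))"
    unfolding split by (rule sum_diff) auto
  have E3: "(\<Sum>A\<in>{A::'n set. A \<noteq> UNIV}. cc n (card A)) = real n * harm n"
    using harm_sum[where 'n='n] unfolding assms(1) .
  have key: "vec.dim (shortened (dual_code C) A) = s - k \<longleftrightarrow> ?P A"
    if "card A = s" "k \<le> s" for A s
  proof -
    have "vec.dim (shortened (dual_code C) A) + vec.dim ((\<lambda>j. column j G) ` A) = s"
      using rank_nullity_short[of G A] Cs that(1) by simp
    moreover have "vec.dim ((\<lambda>j. column j G) ` A) \<le> k"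
      using dim_subset_UNIV_cart_gen[of "(\<lambda>j. column j G) ` A"] assms(2) by simp
    moreover have "?P A \<longleftrightarrow> vec.dim ((\<lambda>j. column j G) ` A) = k"
      using cols_span_iff_dim[of G A] assms(2) by simp
    ultimately show ?thesis using that(2) by linarith
  qed
  have cardP: "card A \<in> {k..n-1}" if "A \<noteq> UNIV \<and> ?P A" for A :: "'n set"
  proof -
    have "A \<subset> UNIV" using that by auto
    then have "card A < card (UNIV :: 'n set)" by (rule psubset_card_mono[rotated]) simp
    then have "card A < n" using assms(1) by simp
    moreover have "vec.dim ((\<lambda>j. column j G) ` A) = k"
      using that cols_span_iff_dim[of G A] assms(2) by simp
    moreover have "vec.dim ((\<lambda>j. column j G) ` A) \<le> card ((\<lambda>j. column j G) ` A)"
      by (rule vec.dim_le_card') simp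
    moreover have "card ((\<lambda>j. column j G) ` A) \<le> card A" by (rule card_image_le) simp
    ultimately show ?thesis by auto
  qed
  have E4: "(\<Sum>A\<in>{A::'n set. A \<noteq> UNIV \<and> ?P A}. cc n (card A)) =
      (\<Sum>s=k..n-1. real (beta (s - k) (dual_code C) (n - s)) / real ((n - 1) choose s))"
  proof -
    have "(\<Sum>A\<in>{A::'n set. A \<noteq> UNIV \<and> ?P A}. cc n (card A)) =
        (\<Sum>s\<in>{k..n-1}. real (card {A::'n set. (A \<noteq> UNIV \<and> ?P A) \<and> card A = s}) * cc n s)"
      by (rule sum_by_card) (use cardP in auto)
    also have "\<dots> = (\<Sum>s=k..n-1. real (beta (s - k) (dual_code C) (n - s)) / real ((n - 1) choose s))"
    proof (rule sum.cong[OF refl])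
      fix s assume s: "s \<in> {k..n-1}"
      then have sn: "s < n" "k \<le> s" using assms(3,4) by auto
      have eq: "{S :: 'n set. card S = n - s \<and> vec.dim (shortened (dual_code C) (- S)) = s - k}
          = uminus ` {A::'n set. (A \<noteq> UNIV \<and> ?P A) \<and> card A = s}"
      proof (rule set_eqI, rule iffI)
        fix S :: "'n set"
        assume H: "S \<in> {S. card S = n - s \<and> vec.dim (shortened (dual_code C) (- S)) = s - k}"
        have cS: "card (- S) = s" using H card_compl_n[of S] assms(1) sn by simp
        then have "?P (- S)" using key[OF cS sn(2)] H by simp
        moreover have "- S \<noteq> UNIV" using cS sn assms(1) by auto
        ultimately have "- S \<in> {A::'n set. (A \<noteq> UNIV \<and> ?P A) \<and> card A = s}" using cS by simp
        then show "S \<in> uminus ` {A::'n set. (A \<noteq> UNIV \<and> ?P A) \<and> card A = s}"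
          by (rule rev_image_eqI) simp
      next
        fix S :: "'n set"
        assume "S \<in> uminus ` {A::'n set. (A \<noteq> UNIV \<and> ?P A) \<and> card A = s}"
        then obtain A where A: "S = - A" "?P A" "card A = s" by blast
        have "card S = n - s" using A card_compl_n[of A] assms(1) by simp
        moreover have "vec.dim (shortened (dual_code C) (- S)) = s - k"
          using key[OF A(3) sn(2)] A by simp
        ultimately show "S \<in> {S. card S = n - s \<and> vec.dim (shortened (dual_code C) (- S)) = s - k}"
          by simp
      qed
      have inj: "inj_on uminus (X :: 'n set set)" for X by (auto simp: inj_on_def)
      have "beta (s - k) (dual_code C) (n - s) = card {A::'n set. (A \<noteq> UNIV \<and> ?P A) \<and> card A = s}"
        unfolding beta_def eq by (rule card_image[OF inj])
      then show "real (card {A::'n set. (A \<noteq> UNIV \<and> ?P A) \<and> card A = s}) * cc n s =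
          real (beta (s - k) (dual_code C) (n - s)) / real ((n - 1) choose s)"
        using cc_choose[OF sn(1)] by simp
    qed
    finally show ?thesis .
  qed
  show ?thesis using E1 E2 E3 E4 by simp
qed

end
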